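(* There exists $C<\infty$ such that for all $n\ge1$ and all $N\ge1$, $\mathbb{E}\big[e_n|\psi_n|\mathbb{1}_{\{e_n|\psi_n|>N^{2/3}\}}\big]\le C N^{-1/3}.$
   Context: Let $\mathbb{T}=\mathbb{R}/\mathbb{Z}$, identified with $[-1/2,1/2)$. Let $v(k)=\sin(2\pi k)/|\sin(\pi k)|$ for $k\neq0$, $\phi(k)=\frac43\sin^2(\pi k)(1+2\cos^2(\pi k))$, and $p(k,k')=8\frac{\cos^2(\pi k)}{1+2\cos^2(\pi k)}\sin^4(\pi k')+8\frac{\sin^2(\pi k)}{1+2\cos^2(\pi k)}\sin^2(\pi k')\cos^2(\pi k')$. Let $(X_n)_{n\ge0}$ be a Markov chain on $\mathbb{T}$ with transition density $p$ and initial distribution $\mu$ with $\int_{\mathbb{T}}k^{-2}d\mu(k)<\infty$; let $(e_n)_{n\ge0}$ be i.i.d. Exp(1), independent of $(X_n)$; $\psi_n=v(X_n)/\phi(X_n)$. *)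

theory Defs
  imports "HOL-Probability.Probability"
begin

text \<open>The torus R/Z is identified with the interval [-1/2, 1/2).\<close>
definition torus :: "real set" where
  "torus = {-1/2..<1/2}"

definition vv :: "real \<Rightarrow> real" where
  "vv k = sin (2*pi*k) / \<bar>sin (pi*k)\<bar>"

definition phi :: "real \<Rightarrow> real" where
  "phi k = 4/3 * (sin (pi*k))^2 * (1 + 2 * (cos (pi*k))^2)"

definition pp :: "real \<Rightarrow> real \<Rightarrow> real" where
  "pp k k' = 8 * (cos (pi*k))^2 / (1 + 2*(cos (pi*k))^2) * (sin (pi*k'))^4
           + 8 * (sin (pi*k))^2 / (1 + 2*(cos (pi*k))^2) * (sin (pi*k'))^2 * (cos (pi*k'))^2"

definition psi :: "real \<Rightarrow> real" where
  "psi k = vv k / phi k"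

text \<open>mk m j A x = probability, for the chain with transition density pp (w.r.t.
 Lebesgue measure on the torus), started at time j in state x, that
 X_(j+1) in A (j+1), ..., X_(j+m) in A (j+m).\<close>
fun mk :: "nat \<Rightarrow> nat \<Rightarrow> (nat \<Rightarrow> real set) \<Rightarrow> real \<Rightarrow> ennreal" where
  "mk 0 j A x = 1"
| "mk (Suc m) j A x =
     (\<integral>\<^sup>+ y. indicator (torus \<inter> A (Suc j)) y * ennreal (pp x y) * mk m (Suc j) A y \<partial>lborel)"

definition markov_chain_pp :: "'a measure \<Rightarrow> (nat \<Rightarrow> 'a \<Rightarrow> real) \<Rightarrow> real measure \<Rightarrow> bool" where
  "markov_chain_pp M X \<mu> \<longleftrightarrow>
     (\<forall>i. X i \<in> borel_measurable M) \<and>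
     (\<forall>i. \<forall>\<omega>\<in>space M. X i \<omega> \<in> torus) \<and>
     (\<forall>n A. (\<forall>i. A i \<in> sets borel) \<longrightarrow>
        emeasure M {\<omega>\<in>space M. \<forall>i\<le>n. X i \<omega> \<in> A i}
          = (\<integral>\<^sup>+ x. indicator (A 0) x * mk n 0 A x \<partial>\<mu>))"

end

theory Submission
  imports Defs
begin

lemma sin_sq_lower:
  fixes x :: real assumes "\<bar>x\<bar> \<le> 1/2"
  shows "3 * x^2 \<le> (sin (pi*x))^2"
proof -
  define y where "y = pi*x"
  have m: "\<bar>sin y - y\<bar> \<le> \<bar>y\<bar>^3/6"
    using Maclaurin_sin_bound[of y 3]
    by (simp add: numeral_3_eq_3 sin_coeff_def divide_simps eval_nat_numeral)
  have pa: "157/50 \<le> pi" "pi \<le> 63/20" using pi_approx by auto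
  have yb: "\<bar>y\<bar> \<le> 8/5"
  proof -
    have "pi * \<bar>x\<bar> \<le> pi * (1/2)" using assms by (intro mult_left_mono) auto
    moreover have "\<bar>y\<bar> = pi*\<bar>x\<bar>" by (simp add: y_def abs_mult)
    ultimately show ?thesis using pa by linarith
  qed
  have "\<bar>y\<bar>^3 = \<bar>y\<bar> * \<bar>y\<bar>^2" by (simp add: power3_eq_cube power2_eq_square)
  also have "\<dots> \<le> \<bar>y\<bar> * (64/25)"
  proof (rule mult_left_mono)
    have "\<bar>y\<bar>^2 \<le> (8/5)^2" by (rule power_mono[OF yb]) simp
    thus "\<bar>y\<bar>^2 \<le> 64/25" by (simp add: power2_eq_square)
  qed simp
  finally have "\<bar>y\<bar> * (57/100) \<le> \<bar>sin y\<bar>" using m abs_triangle_ineq2[of y "sin y"] abs_minus_commute[of y "sin y"] by linarith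
  hence "(\<bar>y\<bar> * (57/100))^2 \<le> \<bar>sin y\<bar>^2" by (intro power_mono) auto
  moreover have "(\<bar>y\<bar>*(57/100))^2 = y^2 * (3249/10000)" by (simp add: power_mult_distrib power_divide)
  ultimately have sy: "y^2 * (3249/10000) \<le> (sin y)^2" by (simp only: power2_abs)
  have y2: "y^2 = pi^2 * x^2" by (simp add: y_def power_mult_distrib)
  have "(157/50)^2 \<le> pi^2" using pa by (intro power_mono) auto
  hence pi2: "49/5 \<le> pi^2" by (simp add: power_divide)
  have "3 * x^2 \<le> ((3249/10000)*(49/5)) * x^2" by (intro mult_right_mono) auto
  also have "\<dots> \<le> ((3249/10000)*pi^2) * x^2" using pi2 by (intro mult_right_mono mult_left_mono) auto
  also have "\<dots> = y^2*(3249/10000)" by (simp add: y2)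
  also have "\<dots> \<le> (sin y)^2" by (rule sy)
  finally show ?thesis by (simp add: y_def)
qed

lemma psi_bound: "\<bar>psi x\<bar> * (sin (pi*x))^2 \<le> 3/2"
proof (cases "sin (pi*x) = 0")
  case True thus ?thesis by (simp add: psi_def vv_def)
next
  case False
  let ?s = "sin (pi*x)" and ?c = "cos (pi*x)"
  have "sin (2*pi*x) = 2 * ?s * ?c" using sin_double[of "pi*x"] by (simp add: mult.assoc)
  hence v: "\<bar>vv x\<bar> = 2*\<bar>?c\<bar>" using False by (simp add: vv_def abs_mult)
  have s2: "?s^2 > 0" using False by simp
  have ph: "phi x \<ge> 4/3 * ?s^2" unfolding phi_def using s2
    by (simp add: mult_le_cancel_left1)
  have php: "phi x > 0" using ph s2 by linarith
  have "\<bar>psi x\<bar> * ?s^2 = \<bar>vv x\<bar> * ?s^2 / phi x" using php by (simp add: psi_def abs_divide)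
  also have "\<dots> \<le> 2 * ?s^2 / (4/3 * ?s^2)"
    using v php ph s2 abs_cos_le_one[of "pi*x"]
    by (intro frac_le) (auto intro!: mult_right_mono)
  also have "\<dots> = 3/2" using s2 by simp
  finally show ?thesis .
qed

lemma pp_bound: "0 \<le> pp x y \<and> pp x y \<le> 8*(sin (pi*y))^2"
proof -
  define aa where "aa = (cos (pi*x))^2"
  define bb where "bb = (sin (pi*x))^2"
  define ss where "ss = (sin (pi*y))^2"
  define cc where "cc = (cos (pi*y))^2"
  have ab: "aa + bb = 1" "aa \<ge> 0" "bb \<ge> 0" by (auto simp: aa_def bb_def)
  have sc: "ss + cc = 1" "ss \<ge> 0" "cc \<ge> 0" by (auto simp: ss_def cc_def)
  have den: "1 + 2*aa > 0" using ab by simp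
  have e0: "pp x y = 8 * aa / (1 + 2*aa) * ss^2 + 8 * bb / (1 + 2*aa) * ss * cc"
    unfolding pp_def aa_def bb_def ss_def cc_def by (simp add: mult.assoc flip: power_mult)
  have e: "pp x y = (8 * ss/(1+2*aa)) * (aa * ss + bb * cc)"
    unfolding e0 by (simp add: algebra_simps power2_eq_square add_divide_distrib)
  have "aa * ss + bb * cc \<le> 1 + 2*aa" using ab sc
    by (smt (verit) mult_left_le mult_nonneg_nonneg)
  moreover have "0 \<le> aa * ss+bb * cc" using ab sc by simp
  ultimately have h: "aa * ss + bb * cc \<le> 1 + 2 * aa" "0 \<le> aa * ss + bb * cc" by auto
  have c0: "8 * ss/(1+2*aa) \<ge> 0" using sc den by simp
  hence "(8 * ss/(1+2*aa)) * (aa * ss + bb * cc) \<le> (8 * ss/(1+2*aa)) * (1 + 2*aa)"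
    using h by (intro mult_left_mono) auto
  also have "\<dots> = 8 * ss" using den by simp
  finally have "pp x y \<le> 8 * ss" unfolding e .
  moreover have "0 \<le> pp x y" unfolding e by (rule mult_nonneg_nonneg[OF c0 h(2)])
  ultimately show ?thesis by (simp add: ss_def)
qed

lemma key_ineq:
  fixes g u x T :: real
  assumes g: "0 \<le> g" and u: "0 \<le> u" and gu: "g*u \<le> 3/2" and ux: "3*x^2 \<le> u" and T: "1 \<le> T"
  shows "8*u*min g (2*g^2/T) \<le> 24/(1+T*x^2)"
proof (cases "u*T \<le> 3")
  case True
  have "T*x^2 \<le> 1"
  proof -
    have "T*(3*x^2) \<le> T*u" using ux T by (intro mult_left_mono) auto
    thus ?thesis using True by (simp add: mult.commute)
  qed
  moreover have "0 \<le> T*x^2" using T by simp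
  ultimately have "12 \<le> 24/(1+T*x^2)" by (simp add: field_simps add_nonneg_pos)
  moreover have "8*u*min g (2*g^2/T) \<le> 8*u*g" using u by (intro mult_left_mono) auto
  moreover have "8*u*g \<le> 12" using gu by (simp add: mult.commute)
  ultimately show ?thesis by linarith
next
  case False
  have Tp: "T > 0" using T by simp
  have "8*u*min g (2*g^2/T) \<le> 8*u*(2*g^2/T)" using u by (intro mult_left_mono) auto
  also have "\<dots> = 16*(g*u)^2/(u*T)" using False Tp by (simp add: field_simps power2_eq_square)
  also have "\<dots> \<le> 16*(3/2)^2/(u*T)" using False Tp g u gu
    by (intro divide_right_mono mult_left_mono power_mono) auto
  also have "\<dots> \<le> 24/(1+T*x^2)"
  proof -
    have "T*(3*x^2) \<le> T*u" using ux T by (intro mult_left_mono) auto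
    hence "36*(1+T*x^2) \<le> 24*(u*T)" using False by (simp add: algebra_simps)
    thus ?thesis using False Tp by (simp add: field_simps add_pos_nonneg)
  qed
  finally show ?thesis .
qed

lemma arctan_integral:
  fixes a :: real assumes a: "0 < a"
  shows "(\<integral>\<^sup>+ x. ennreal (24/(1+a^2*x^2)) * indicator {-1/2..1/2} x \<partial>lborel) \<le> ennreal (24*pi/a)"
proof -
  define F where "F x = 24/a * arctan (a*x)" for x
  have d: "(F has_real_derivative 24/(1+a^2*x^2)) (at x)" for x
  proof -
    have "(F has_real_derivative 24/a * (inverse (1 + (a*x)^2) * a)) (at x)"
      unfolding F_def by (auto intro!: derivative_eq_intros)
    thus ?thesis using a by (simp add: field_simps power_mult_distrib)
  qed
  have "((\<lambda>x. 24/(1+a^2*x^2)) has_integral (F (1/2) - F (-1/2))) {-1/2..1/2}"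
    by (rule fundamental_theorem_of_calculus)
       (auto simp: has_real_derivative_iff_has_vector_derivative[symmetric] intro!: has_field_derivative_at_within[OF d])
  hence eq: "(\<integral>\<^sup>+ x. ennreal (24/(1+a^2*x^2)) * indicator {-1/2..1/2} x \<partial>lborel) = ennreal (F (1/2) - F (-1/2))"
    by (intro nn_integral_has_integral_lebesgue') (auto intro!: add_nonneg_pos)
  have le: "F (1/2) - F (-1/2) \<le> 24*pi/a"
  proof -
    have "arctan (a*(1/2)) - arctan (a*(-1/2)) \<le> pi"
      using arctan_ubound[of "a*(1/2)"] arctan_lbound[of "a*(-1/2)"] by linarith
    hence "24/a * (arctan (a*(1/2)) - arctan (a*(-1/2))) \<le> 24/a * pi" using a
      by (intro mult_left_mono) auto
    thus ?thesis by (simp add: F_def right_diff_distrib)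
  qed
  show ?thesis unfolding eq using le by (rule ennreal_leI)
qed


lemma psi_meas[measurable]: "psi \<in> borel_measurable borel"
  unfolding psi_def vv_def phi_def by measurable

lemma pp_meas[measurable]: "(\<lambda>(x,y). pp x y) \<in> borel_measurable (borel \<Otimes>\<^sub>M borel)"
  unfolding pp_def by measurable

lemma mk_meas:
  assumes A: "\<And>i. A i \<in> sets borel"
  shows "mk m j A \<in> borel_measurable borel"
proof (induction m arbitrary: j)
  case 0 thus ?case by simp
next
  case (Suc m)
  have "(\<lambda>(x,y). indicator (torus \<inter> A (Suc j)) y * ennreal (pp x y) * mk m (Suc j) A y)
         \<in> borel_measurable (borel \<Otimes>\<^sub>M lborel)"
  proof -
    have t: "torus \<in> sets borel" unfolding torus_def by simp
    have [measurable]: "A (Suc j) \<in> sets borel" by (rule A)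
    have [measurable]: "mk m (Suc j) A \<in> borel_measurable borel" by (rule Suc.IH)
    show ?thesis using t pp_meas by measurable
  qed
  from lborel.borel_measurable_nn_integral[OF this]
  show ?case by (simp add: split_beta')
qed


definition ww :: "real \<Rightarrow> ennreal" where
  "ww y = indicator torus y * ennreal (8*(sin (pi*y))^2)"

definition beta :: "real set \<Rightarrow> ennreal" where
  "beta B = (\<integral>\<^sup>+ y. ww y * indicator B y \<partial>lborel)"

lemma ww_meas[measurable]: "ww \<in> borel_measurable borel"
proof -
  have t: "torus \<in> sets borel" unfolding torus_def by simp
  show ?thesis unfolding ww_def using t by measurable
qed

lemma mk_bound:
  assumes A: "\<And>i. A i \<in> sets borel"
  shows "mk (Suc m) j A x \<le> beta (A (j + Suc m)) * mk m j A x"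
proof (induction m arbitrary: j x)
  case 0
  have "mk (Suc 0) j A x = (\<integral>\<^sup>+ y. indicator (torus \<inter> A (Suc j)) y * ennreal (pp x y) \<partial>lborel)"
    by simp
  also have "\<dots> \<le> (\<integral>\<^sup>+ y. ww y * indicator (A (Suc j)) y \<partial>lborel)"
  proof (rule nn_integral_mono)
    fix y
    show "indicator (torus \<inter> A (Suc j)) y * ennreal (pp x y) \<le> ww y * indicator (A (Suc j)) y"
      using pp_bound[of x y] by (auto simp: ww_def indicator_def intro!: ennreal_leI)
  qed
  finally show ?case by (simp add: beta_def)
next
  case (Suc m)
  have [measurable]: "mk m (Suc j) A \<in> borel_measurable borel" by (rule mk_meas[OF A])
  have t: "torus \<in> sets borel" unfolding torus_def by simp
  have [measurable]: "A (Suc j) \<in> sets borel" by (rule A)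
  have "mk (Suc (Suc m)) j A x
      = (\<integral>\<^sup>+ y. indicator (torus \<inter> A (Suc j)) y * ennreal (pp x y) * mk (Suc m) (Suc j) A y \<partial>lborel)"
    by simp
  also have "\<dots> \<le> (\<integral>\<^sup>+ y. beta (A (j + Suc (Suc m))) *
       (indicator (torus \<inter> A (Suc j)) y * ennreal (pp x y) * mk m (Suc j) A y) \<partial>lborel)"
  proof (rule nn_integral_mono)
    fix y
    have "mk (Suc m) (Suc j) A y \<le> beta (A (j + Suc (Suc m))) * mk m (Suc j) A y"
      using Suc.IH[of "Suc j" y] by simp
    hence "indicator (torus \<inter> A (Suc j)) y * ennreal (pp x y) * mk (Suc m) (Suc j) A y
       \<le> indicator (torus \<inter> A (Suc j)) y * ennreal (pp x y) * (beta (A (j + Suc (Suc m))) * mk m (Suc j) A y)"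
      by (intro mult_left_mono) auto
    thus "indicator (torus \<inter> A (Suc j)) y * ennreal (pp x y) * mk (Suc m) (Suc j) A y
       \<le> beta (A (j + Suc (Suc m))) * (indicator (torus \<inter> A (Suc j)) y * ennreal (pp x y) * mk m (Suc j) A y)"
      by (simp add: ac_simps)
  qed
  also have "\<dots> = beta (A (j + Suc (Suc m))) * mk (Suc m) j A x"
  proof -
    have [measurable]: "(\<lambda>y. pp x y) \<in> borel_measurable borel" unfolding pp_def by measurable
    have mf: "(\<lambda>y. indicator (torus \<inter> A (Suc j)) y * ennreal (pp x y) * mk m (Suc j) A y) \<in> borel_measurable lborel"
      using t by measurable
    show ?thesis by (simp add: nn_integral_cmult[OF mf])
  qed
  finally show ?case .
qed


lemma inner_bound:
  fixes g T :: real assumes g: "0 \<le> g" and T: "1 \<le> T"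
  shows "(\<integral>\<^sup>+ t. ennreal (exponential_density 1 t) * ennreal (t * g * (if T < t * g then 1 else 0)) \<partial>lborel)
         \<le> ennreal (min g (2*g^2/T))"
proof -
  let ?I = "(\<integral>\<^sup>+ t. ennreal (exponential_density 1 t) * ennreal (t * g * (if T < t * g then 1 else 0)) \<partial>lborel)"
  have m1: "(\<lambda>t. ennreal (t^1 * exp (-t)) * indicator {0..} t) \<in> borel_measurable lborel" by measurable
  have m2: "(\<lambda>t. ennreal (t^2 * exp (-t)) * indicator {0..} t) \<in> borel_measurable lborel" by measurable
  have b1: "?I \<le> ennreal g"
  proof -
    have "?I \<le> (\<integral>\<^sup>+ t. ennreal g * (ennreal (t^1 * exp (-t)) * indicator {0..} t) \<partial>lborel)"
    proof (rule nn_integral_mono)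
      fix t :: real
      show "ennreal (exponential_density 1 t) * ennreal (t * g * (if T < t * g then 1 else 0))
            \<le> ennreal g * (ennreal (t^1 * exp (-t)) * indicator {0..} t)"
      proof (cases "t < 0")
        case True thus ?thesis by (simp add: exponential_density_def)
      next
        case False
        hence "exp (-t) * (t * g * (if T < t * g then 1 else 0)) \<le> g * (t^1 * exp (-t))"
          using g by (auto simp: algebra_simps)
        thus ?thesis using False g
          by (simp add: exponential_density_def ennreal_mult'[symmetric] ennreal_leI)
      qed
    qed
    also have "\<dots> = ennreal g * real_of_nat (fact 1)"
      by (simp only: nn_integral_cmult[OF m1] nn_intergal_power_times_exp_Ici)
    finally show ?thesis by simp
  qed
  have b2: "?I \<le> ennreal (2*g^2/T)"
  proof -
    have "?I \<le> (\<integral>\<^sup>+ t. ennreal (g^2/T) * (ennreal (t^2 * exp (-t)) * indicator {0..} t) \<partial>lborel)"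
    proof (rule nn_integral_mono)
      fix t :: real
      show "ennreal (exponential_density 1 t) * ennreal (t * g * (if T < t * g then 1 else 0))
            \<le> ennreal (g^2/T) * (ennreal (t^2 * exp (-t)) * indicator {0..} t)"
      proof (cases "t < 0")
        case True thus ?thesis by (simp add: exponential_density_def)
      next
        case False
        have "t * g * (if T < t * g then 1 else 0) \<le> g^2/T * t^2"
        proof (cases "T < t*g")
          case True
          hence "t*g*T \<le> t*g*(t*g)" using False g by (intro mult_left_mono) auto
          hence "t*g \<le> (t*g)^2/T" using T by (simp add: field_simps power2_eq_square)
          thus ?thesis using True by (simp add: power_mult_distrib mult.commute)
        next
          case False2: False
          thus ?thesis using T by simp
        qed
        hence "exp (-t) * (t * g * (if T < t * g then 1 else 0)) \<le> exp (-t) * (g^2/T * t^2)"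
          by (intro mult_left_mono) auto
        also have "\<dots> = g^2/T * (t^2 * exp (-t))" by simp
        finally have "exp (-t) * (t * g * (if T < t * g then 1 else 0)) \<le> g^2/T * (t^2 * exp (-t))" .
        thus ?thesis using False g T
          by (simp add: exponential_density_def ennreal_mult'[symmetric] ennreal_leI)
      qed
    qed
    also have "\<dots> = ennreal (g^2/T) * real_of_nat (fact 2)"
      by (simp only: nn_integral_cmult[OF m2] nn_intergal_power_times_exp_Ici)
    also have "\<dots> = ennreal 2 * ennreal (g^2/T)" by (simp add: mult.commute)
    also have "\<dots> = ennreal (2*(g^2/T))" using T by (intro ennreal_mult''[symmetric]) auto
    also have "\<dots> = ennreal (2*g^2/T)" by simp
    finally show ?thesis .
  qed
  have "?I \<le> min (ennreal g) (ennreal (2*g^2/T))" using b1 b2 by simp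
  also have "\<dots> = ennreal (min g (2*g^2/T))" using g T by (intro min_ennreal) auto
  finally show ?thesis .
qed


theorem lemma5p2:
  fixes M :: "'a measure" and X e :: "nat \<Rightarrow> 'a \<Rightarrow> real" and \<mu> :: "real measure"
  assumes "prob_space M"
    and "prob_space \<mu>" and "sets \<mu> = sets borel" and "emeasure \<mu> torus = 1"
    and "(\<integral>\<^sup>+ k. (if k = 0 then \<infinity> else ennreal (1 / k^2)) \<partial>\<mu>) < \<infinity>"
    and "markov_chain_pp M X \<mu>"
    and "\<forall>i. distributed M lborel (e i) (exponential_density 1)"
    and "prob_space.indep_vars M (\<lambda>_. borel) e UNIV"
    and "prob_space.indep_var M (Pi\<^sub>M UNIV (\<lambda>_. borel)) (\<lambda>\<omega> i. X i \<omega>)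
                                (Pi\<^sub>M UNIV (\<lambda>_. borel)) (\<lambda>\<omega> i. e i \<omega>)"
  shows "\<exists>C::real. \<forall>n::nat. \<forall>N::real. n \<ge> 1 \<longrightarrow> N \<ge> 1 \<longrightarrow>
           (\<integral>\<^sup>+ \<omega>. ennreal (e n \<omega> * \<bar>psi (X n \<omega>)\<bar> *
                 indicator {\<omega>. e n \<omega> * \<bar>psi (X n \<omega>)\<bar> > N powr (2/3)} \<omega>) \<partial>M)
             \<le> ennreal (C * N powr (-1/3))"
proof -
  interpret M: prob_space M by fact
  note mc = assms(6)[unfolded markov_chain_pp_def]
  have Xm[measurable]: "\<And>i. X i \<in> borel_measurable M" using mc by blast
  have Xfd: "\<And>n A. (\<forall>i. A i \<in> sets borel) \<Longrightarrow> emeasure M {\<omega>\<in>space M. \<forall>i\<le>n. X i \<omega> \<in> A i}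
          = (\<integral>\<^sup>+ x. indicator (A 0) x * mk n 0 A x \<partial>\<mu>)" using mc by blast
  have em[measurable]: "\<And>i. e i \<in> borel_measurable M"
    using assms(7) unfolding distributed_def measurable_lborel1 by blast
  have t: "torus \<in> sets borel" unfolding torus_def by simp
  have mu_meas: "\<And>f. f \<in> borel_measurable borel \<Longrightarrow> f \<in> borel_measurable \<mu>"
    using measurable_cong_sets[OF assms(3) refl, of borel] by blast

  have distb: "emeasure M {\<omega>\<in>space M. X n \<omega> \<in> B} \<le> beta B"
    if n: "n \<ge> 1" and B: "B \<in> sets borel" for n B
  proof -
    obtain m where nm: "n = Suc m" using n by (cases n) auto
    define A where "A i = (if i = n then B else UNIV)" for i
    have A: "\<And>i. A i \<in> sets borel" using B by (simp add: A_def)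
    have [measurable]: "\<And>k j. mk k j A \<in> borel_measurable borel" by (rule mk_meas[where A=A, OF A])
    have A0: "A 0 = UNIV" using nm by (simp add: A_def)
    have s: "{\<omega>\<in>space M. X n \<omega> \<in> B} = {\<omega>\<in>space M. \<forall>i\<le>n. X i \<omega> \<in> A i}"
      unfolding A_def by auto
    have e1: "emeasure M {\<omega>\<in>space M. \<forall>i\<le>n. X i \<omega> \<in> A i} = (\<integral>\<^sup>+ x. mk (Suc m) 0 A x \<partial>\<mu>)"
      using Xfd[OF allI[OF A], of n] by (simp add: A0 nm)
    have e2: "(\<integral>\<^sup>+ x. mk (Suc m) 0 A x \<partial>\<mu>) \<le> (\<integral>\<^sup>+ x. beta B * mk m 0 A x \<partial>\<mu>)"
    proof (rule nn_integral_mono)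
      fix x
      have "A (0 + Suc m) = B" by (simp add: A_def nm)
      thus "mk (Suc m) 0 A x \<le> beta B * mk m 0 A x" using mk_bound[where A=A and m=m and j=0 and x=x, OF A] by simp
    qed
    have e3: "(\<integral>\<^sup>+ x. beta B * mk m 0 A x \<partial>\<mu>) = beta B * (\<integral>\<^sup>+ x. mk m 0 A x \<partial>\<mu>)"
      by (rule nn_integral_cmult) (rule mu_meas, rule mk_meas[where A=A, OF A])
    have e4: "(\<integral>\<^sup>+ x. mk m 0 A x \<partial>\<mu>) = emeasure M {\<omega>\<in>space M. \<forall>i\<le>m. X i \<omega> \<in> A i}"
      using Xfd[OF allI[OF A], of m] by (simp add: A0)
    have e5: "emeasure M {\<omega>\<in>space M. \<forall>i\<le>m. X i \<omega> \<in> A i} \<le> 1" by (rule M.emeasure_le_1)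
    have "beta B * (\<integral>\<^sup>+ x. mk m 0 A x \<partial>\<mu>) \<le> beta B * 1"
      unfolding e4 using e5 by (rule mult_left_mono) simp
    thus ?thesis using s e1 e2 e3 by simp
  qed
  define D where "D = density lborel ww"
  have setsD: "sets D = sets borel" by (simp add: D_def)
  have nuD: "distr M borel (X n) \<le> D" if n: "n \<ge> 1" for n
    unfolding le_measure_iff
  proof (simp add: D_def le_fun_def, intro allI)
    fix B :: "real set"
    show "emeasure (distr M borel (X n)) B \<le> emeasure (density lborel ww) B"
    proof (cases "B \<in> sets borel")
      case True
      have "emeasure (distr M borel (X n)) B = emeasure M (X n -` B \<inter> space M)"
        using True by (intro emeasure_distr) auto
      also have "X n -` B \<inter> space M = {\<omega>\<in>space M. X n \<omega> \<in> B}" by auto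
      also have "emeasure M \<dots> \<le> beta B" by (rule distb[OF n True])
      also have "beta B = emeasure (density lborel ww) B"
        unfolding beta_def using True by (intro emeasure_density[symmetric]) auto
      finally show ?thesis .
    next
      case False
      thus ?thesis by (simp add: emeasure_notin_sets)
    qed
  qed
  have main: "(\<integral>\<^sup>+ \<omega>. ennreal (e n \<omega> * \<bar>psi (X n \<omega>)\<bar> *
                 indicator {\<omega>. e n \<omega> * \<bar>psi (X n \<omega>)\<bar> > N powr (2/3)} \<omega>) \<partial>M)
             \<le> ennreal ((24*pi) * N powr (-1/3))" if n: "n \<ge> 1" and N: "N \<ge> 1" for n N
  proof -
    define a where "a = N powr (1/3)"
    have a1: "a \<ge> 1" unfolding a_def using N by (intro ge_one_powr_ge_zero) auto
    define T where "T = a^2"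
    have T1: "T \<ge> 1" unfolding T_def using a1 by (simp add: one_le_power)
    have NT: "N powr (2/3) = T" unfolding T_def a_def power2_eq_square
      by (simp add: powr_add[symmetric])
    have Na: "N powr (- (1/3)) = 1/a" unfolding a_def
      by (simp add: powr_minus_divide[symmetric])
    define F where "F p = ennreal (snd p * \<bar>psi (fst p)\<bar> * (if T < snd p * \<bar>psi (fst p)\<bar> then 1 else 0))"
      for p :: "real \<times> real"
    have Fm[measurable]: "F \<in> borel_measurable (borel \<Otimes>\<^sub>M borel)" unfolding F_def by measurable
    define \<nu> where "\<nu> = distr M borel (X n)"
    define E where "E = distr M borel (e n)"
    have eq1: "(\<integral>\<^sup>+ \<omega>. ennreal (e n \<omega> * \<bar>psi (X n \<omega>)\<bar> *
                 indicator {\<omega>. e n \<omega> * \<bar>psi (X n \<omega>)\<bar> > N powr (2/3)} \<omega>) \<partial>M)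
        = (\<integral>\<^sup>+ \<omega>. F (X n \<omega>, e n \<omega>) \<partial>M)"
      unfolding NT by (intro nn_integral_cong) (simp add: F_def indicator_def)
    also have "\<dots> = (\<integral>\<^sup>+ p. F p \<partial>distr M (borel \<Otimes>\<^sub>M borel) (\<lambda>\<omega>. (X n \<omega>, e n \<omega>)))"
      by (rule nn_integral_distr[symmetric]) auto
    also have "distr M (borel \<Otimes>\<^sub>M borel) (\<lambda>\<omega>. (X n \<omega>, e n \<omega>)) = \<nu> \<Otimes>\<^sub>M E"
    proof -
      have "M.indep_var borel ((\<lambda>f. f n) \<circ> (\<lambda>\<omega> i. X i \<omega>)) borel ((\<lambda>f. f n) \<circ> (\<lambda>\<omega> i. e i \<omega>))"
        by (rule M.indep_var_compose[OF assms(9)]) auto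
      hence "M.indep_var borel (X n) borel (e n)" by (simp add: comp_def)
      hence "distr M borel (X n) \<Otimes>\<^sub>M distr M borel (e n) = distr M (borel \<Otimes>\<^sub>M borel) (\<lambda>\<omega>. (X n \<omega>, e n \<omega>))"
        using M.indep_var_distribution_eq[of borel "X n" borel "e n"] by blast
      thus ?thesis unfolding \<nu>_def E_def by (rule sym)
    qed
    finally have eqA: "(\<integral>\<^sup>+ \<omega>. ennreal (e n \<omega> * \<bar>psi (X n \<omega>)\<bar> *
                 indicator {\<omega>. e n \<omega> * \<bar>psi (X n \<omega>)\<bar> > N powr (2/3)} \<omega>) \<partial>M)
        = (\<integral>\<^sup>+ p. F p \<partial>(\<nu> \<Otimes>\<^sub>M E))" .
    interpret E: prob_space E unfolding E_def by (rule M.prob_space_distr) auto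
    have Ed: "E = density lborel (\<lambda>x. ennreal (exponential_density 1 x))"
    proof -
      have "E = distr M lborel (e n)" unfolding E_def by (rule distr_cong) auto
      thus ?thesis using assms(7) unfolding distributed_def by auto
    qed
    have edm[measurable]: "(\<lambda>x. ennreal (exponential_density 1 x)) \<in> borel_measurable borel"
      using assms(7) unfolding distributed_def by auto
    have "(\<integral>\<^sup>+ p. F p \<partial>(\<nu> \<Otimes>\<^sub>M E)) = (\<integral>\<^sup>+ x. \<integral>\<^sup>+ t. F (x, t) \<partial>E \<partial>\<nu>)"
    proof (rule E.nn_integral_fst[symmetric])
      show "F \<in> borel_measurable (\<nu> \<Otimes>\<^sub>M E)"
        using Fm by (simp add: \<nu>_def E_def cong: measurable_cong_sets)
    qed
    also have "\<dots> \<le> (\<integral>\<^sup>+ x. ennreal (min \<bar>psi x\<bar> (2*\<bar>psi x\<bar>^2/T)) \<partial>\<nu>)"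
    proof (rule nn_integral_mono)
      fix x
      have "(\<integral>\<^sup>+ t. F (x, t) \<partial>E) = (\<integral>\<^sup>+ t. ennreal (exponential_density 1 t) * F (x, t) \<partial>lborel)"
        unfolding Ed by (rule nn_integral_density) (auto simp: F_def)
      also have "\<dots> \<le> ennreal (min \<bar>psi x\<bar> (2*\<bar>psi x\<bar>^2/T))"
        unfolding F_def using inner_bound[of "\<bar>psi x\<bar>" T] T1 by simp
      finally show "(\<integral>\<^sup>+ t. F (x, t) \<partial>E) \<le> ennreal (min \<bar>psi x\<bar> (2*\<bar>psi x\<bar>^2/T))" .
    qed
    also have "\<dots> \<le> (\<integral>\<^sup>+ x. ennreal (min \<bar>psi x\<bar> (2*\<bar>psi x\<bar>^2/T)) \<partial>D)"
      unfolding \<nu>_def by (rule nn_integral_mono_measure) (auto simp: setsD nuD[OF n])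
    also have "\<dots> = (\<integral>\<^sup>+ x. ww x * ennreal (min \<bar>psi x\<bar> (2*\<bar>psi x\<bar>^2/T)) \<partial>lborel)"
      unfolding D_def by (rule nn_integral_density) auto
    also have "\<dots> \<le> (\<integral>\<^sup>+ x. ennreal (24/(1+a^2*x^2)) * indicator {-1/2..1/2} x \<partial>lborel)"
    proof (rule nn_integral_mono)
      fix x :: real
      show "ww x * ennreal (min \<bar>psi x\<bar> (2*\<bar>psi x\<bar>^2/T)) \<le> ennreal (24/(1+a^2*x^2)) * indicator {-1/2..1/2} x"
      proof (cases "x \<in> torus")
        case False thus ?thesis by (simp add: ww_def)
      next
        case True
        hence xb: "\<bar>x\<bar> \<le> 1/2" and xi: "x \<in> {-1/2..1/2}" by (auto simp: torus_def)
        define u where "u = (sin (pi*x))^2"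
        have k: "8*u*min \<bar>psi x\<bar> (2*\<bar>psi x\<bar>^2/T) \<le> 24/(1+T*x^2)"
          by (rule key_ineq) (use psi_bound[of x] sin_sq_lower[OF xb] T1 in \<open>auto simp: u_def mult.commute\<close>)
        have "ww x * ennreal (min \<bar>psi x\<bar> (2*\<bar>psi x\<bar>^2/T)) = ennreal (8*u*min \<bar>psi x\<bar> (2*\<bar>psi x\<bar>^2/T))"
          using True T1 by (simp add: ww_def u_def ennreal_mult[symmetric])
        also have "\<dots> \<le> ennreal (24/(1+a^2*x^2))" using k by (intro ennreal_leI) (simp add: T_def)
        finally show ?thesis using xi by simp
      qed
    qed
    also have "\<dots> \<le> ennreal (24*pi/a)" using a1 by (intro arctan_integral) auto
    also have "24*pi/a = (24*pi) * N powr (-1/3)" by (simp add: Na)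
    finally show ?thesis using eqA by simp
  qed
  show ?thesis using main by blast
qed

end
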